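(* Let $\xi$ be the distribution defined below. Then $\widehat\xi(1)<\infty$ and $\widehat\xi(1+i)=0$.
   Context: Define on $[0,\infty)$ the functions $\phi_1(x)=e^{-x}\big(3\pi+1+\sqrt2\sin(x-\tfrac{\pi}{4})\big)$ and $\phi_2(x)=\frac{1}{3\pi}1_{[0,2\pi)}(x)+\sum_{n=1}^\infty\frac{1}{\pi^3n^2}1_{[2n\pi,2(n+1)\pi)}(x)$. Both are positive, right-continuous and decreasing on $[0,\infty)$, with $\phi_1(0)\phi_2(0)=1$. Let $\xi$ be the probability distribution on $[0,\infty)$ whose tail is $\bar\xi(x):=\xi((x,\infty))=\phi_1(x)\phi_2(x)$ for $x\ge0$. For a distribution $\rho$, $\widehat\rho(w):=\int e^{wx}\rho(dx)$ for complex $w$ whenever the integral converges absolutely. *)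

theory Defs
  imports "HOL-Probability.Probability"
begin

definition phi1 :: "real \<Rightarrow> real" where
  "phi1 x = exp (- x) * (3 * pi + 1 + sqrt 2 * sin (x - pi / 4))"

definition phi2 :: "real \<Rightarrow> real" where
  "phi2 x = 1 / (3 * pi) * indicator {0..<2 * pi} x
     + (\<Sum>n. 1 / (pi ^ 3 * real (Suc n) ^ 2)
              * indicator {2 * real (Suc n) * pi ..< 2 * (real (Suc n) + 1) * pi} x)"

text \<open>Tail of the distribution xi on [0,infinity).\<close>
definition xi_tail :: "real \<Rightarrow> real" where
  "xi_tail x = phi1 x * phi2 x"

end

theory Submission
  imports Defs
begin

lemma tail_fubini:
  fixes M :: "real measure" and G h :: "real \<Rightarrow> real"
  assumes P: "prob_space M" and sM: "sets M = sets borel" and neg: "emeasure M {..<0} = 0"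
   and G: "\<And>t. (G has_real_derivative h t) (at t)" and hc: "\<And>t. isCont h t"
   and int: "integrable lborel (\<lambda>t. h t * measure M {t<..} * indicator {0..} t)"
  shows "integrable M G \<and> integral\<^sup>L M G = G 0 + (\<integral>t. h t * measure M {t<..} * indicator {0..} t \<partial>lborel)"
proof -
  interpret prob_space M by (rule P)
  interpret PS: pair_sigma_finite M lborel
    by (simp add: pair_sigma_finite_def prob_space_imp_sigma_finite P lborel.sigma_finite_measure_axioms)
  have hm[measurable]: "h \<in> borel_measurable borel"
    by (intro borel_measurable_continuous_onI continuous_at_imp_continuous_on) (simp add: hc)
  have GB: "G \<in> borel_measurable borel"
    by (intro borel_measurable_continuous_onI continuous_at_imp_continuous_on) (use G DERIV_isCont in blast)
  have Gm[measurable]: "G \<in> borel_measurable M"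
    using GB measurable_cong_sets[OF sM refl, of borel] by blast
  define F where "F x t = (if 0 \<le> t \<and> t < x then h t else 0)" for x t :: real
  have Fm: "(\<lambda>(x,t). F x t) \<in> borel_measurable (M \<Otimes>\<^sub>M lborel)"
  proof -
    have "(\<lambda>(x,t). F x t) \<in> borel_measurable (borel \<Otimes>\<^sub>M lborel)"
    proof -
      have "(\<lambda>z. if 0 \<le> snd z \<and> snd z < fst z then h (snd z) else 0) \<in> borel_measurable (borel \<Otimes>\<^sub>M (lborel::real measure))"
        by (rule measurable_If) measurable
      moreover have "(\<lambda>(x,t). F x t) = (\<lambda>z. if 0 \<le> snd z \<and> snd z < fst z then h (snd z) else 0)"
        by (auto simp: F_def fun_eq_iff)
      ultimately show ?thesis by simp
    qed
    moreover have "sets (M \<Otimes>\<^sub>M lborel) = sets (borel \<Otimes>\<^sub>M lborel)"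
      by (rule sets_pair_measure_cong[OF sM refl])
    ultimately show ?thesis using measurable_cong_sets[of "M \<Otimes>\<^sub>M lborel" "borel \<Otimes>\<^sub>M lborel" borel borel] by blast
  qed
  have inner_M: "(\<integral>\<^sup>+x. ennreal (norm (F x t)) \<partial>M) = ennreal (norm (h t * measure M {t<..} * indicator {0..} t))" for t
  proof -
    have "(\<integral>\<^sup>+x. ennreal (norm (F x t)) \<partial>M) = (\<integral>\<^sup>+x. ennreal (norm (h t) * indicator {0..} t) * indicator {t<..} x \<partial>M)"
      by (intro nn_integral_cong) (auto simp: F_def indicator_def)
    also have "\<dots> = ennreal (norm (h t) * indicator {0..} t) * emeasure M {t<..}"
      by (rule nn_integral_cmult_indicator) (simp add: sM)
    also have "\<dots> = ennreal (norm (h t * measure M {t<..} * indicator {0..} t))"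
      by (simp add: emeasure_eq_measure ennreal_mult[symmetric] abs_mult indicator_def)
    finally show ?thesis .
  qed
  have Fint: "integrable (M \<Otimes>\<^sub>M lborel) (\<lambda>(x,t). F x t)"
  proof (subst integrable_iff_bounded, intro conjI)
    show "(\<lambda>(x,t). F x t) \<in> borel_measurable (M \<Otimes>\<^sub>M lborel)" by (rule Fm)
    have "(\<integral>\<^sup>+z. ennreal (norm ((\<lambda>(x,t). F x t) z)) \<partial>(M \<Otimes>\<^sub>M lborel))
        = (\<integral>\<^sup>+t. (\<integral>\<^sup>+x. ennreal (norm (F x t)) \<partial>M) \<partial>lborel)"
      using PS.nn_integral_snd[of "\<lambda>z. ennreal (norm ((\<lambda>(x,t). F x t) z))"] Fm by simp
    also have "\<dots> = (\<integral>\<^sup>+t. ennreal (norm (h t * measure M {t<..} * indicator {0..} t)) \<partial>lborel)"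
      by (rule nn_integral_cong) (rule inner_M)
    also have "\<dots> < \<infinity>" using int by (simp add: integrable_iff_bounded)
    finally show "(\<integral>\<^sup>+z. ennreal (norm ((\<lambda>(x,t). F x t) z)) \<partial>(M \<Otimes>\<^sub>M lborel)) < \<infinity>" .
  qed
  have fub: "(\<integral>t. (\<integral>x. F x t \<partial>M) \<partial>lborel) = (\<integral>x. (\<integral>t. F x t \<partial>lborel) \<partial>M)"
    by (rule PS.Fubini_integral) (use Fint in simp)
  have i1: "(\<integral>x. F x t \<partial>M) = h t * measure M {t<..} * indicator {0..} t" for t
  proof -
    have "(\<integral>x. F x t \<partial>M) = (\<integral>x. (h t * indicator {0..} t) * indicator {t<..} x \<partial>M)"
      by (intro Bochner_Integration.integral_cong) (auto simp: F_def indicator_def)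
    also have "\<dots> = (h t * indicator {0..} t) * measure M {t<..}"
      by (simp add: sM)
    finally show ?thesis by simp
  qed
  have i2: "(\<integral>t. F x t \<partial>lborel) = G x - G 0" if "0 \<le> x" for x
  proof -
    have "(\<integral>t. F x t \<partial>lborel) = (\<integral>t. h t * indicator {0..x} t \<partial>lborel)"
      by (intro integral_cong_AE) (use AE_lborel_singleton[of x] in \<open>auto elim!: eventually_mono simp: F_def indicator_def\<close>)
    also have "\<dots> = G x - G 0"
      by (rule integral_FTC_Icc_real) (use that G hc in auto)
    finally show ?thesis .
  qed
  have AEpos: "AE x in M. 0 \<le> x"
    by (rule AE_I[of _ _ "{..<0}"]) (auto simp: neg sM)
  have intfst: "integrable M (\<lambda>x. \<integral>t. F x t \<partial>lborel)"
    by (rule PS.integrable_fst) (use Fint in simp)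
  have intG0: "integrable M (\<lambda>x. G x - G 0)"
    using intfst by (rule integrable_cong_AE_imp) (use AEpos i2 in \<open>auto elim!: eventually_mono\<close>)
  have eqG0: "(\<integral>x. (\<integral>t. F x t \<partial>lborel) \<partial>M) = (\<integral>x. G x - G 0 \<partial>M)"
    by (intro integral_cong_AE) (use AEpos i2 borel_measurable_integrable[OF intfst] in \<open>auto elim!: eventually_mono\<close>)
  have intG: "integrable M G"
  proof -
    have "integrable M (\<lambda>x. (G x - G 0) + G 0)" using intG0 by (intro Bochner_Integration.integrable_add) auto
    then show ?thesis by simp
  qed
  have "(\<integral>x. G x - G 0 \<partial>M) = integral\<^sup>L M G - G 0"
    using intG by (simp add: prob_space)
  then show ?thesis using intG fub eqG0 i1 by simp
qed
lemma Ico_integral: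
  fixes q Q :: "real \<Rightarrow> real"
  assumes Q: "\<And>t. (Q has_real_derivative q t) (at t)" and qc: "\<And>t. isCont q t" and ab: "a \<le> b"
  shows "integrable lborel (\<lambda>t. q t * indicator {a..<b} t)"
    and "(\<integral>t. q t * indicator {a..<b} t \<partial>lborel) = Q b - Q a"
proof -
  have ci: "integrable lborel (\<lambda>t. indicator {a..b} t *\<^sub>R q t)"
  proof -
    have "continuous_on {a..b} q" by (intro continuous_at_imp_continuous_on) (simp add: qc)
    then show ?thesis by (rule borel_integrable_compact[OF compact_Icc])
  qed
  have "integrable lborel (\<lambda>t. indicator {a..<b} t *\<^sub>R (indicator {a..b} t *\<^sub>R q t))"
    by (rule integrable_mult_indicator[OF _ ci]) simp
  moreover have "(\<lambda>t. indicator {a..<b} t *\<^sub>R (indicator {a..b} t *\<^sub>R q t)) = (\<lambda>t. q t * indicator {a..<b} t)"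
    by (auto simp: fun_eq_iff indicator_def)
  ultimately show i: "integrable lborel (\<lambda>t. q t * indicator {a..<b} t)" by metis
  have qm[measurable]: "q \<in> borel_measurable borel"
    by (intro borel_measurable_continuous_onI continuous_at_imp_continuous_on) (simp add: qc)
  have m1: "(\<lambda>t. q t * indicator {a..<b} t) \<in> borel_measurable borel" by measurable
  have m2: "(\<lambda>t. q t * indicator {a..b} t) \<in> borel_measurable borel" by measurable
  have "(\<integral>t. q t * indicator {a..<b} t \<partial>lborel) = (\<integral>t. q t * indicator {a..b} t \<partial>lborel)"
    by (intro integral_cong_AE) (use AE_lborel_singleton[of b] m1 m2 in \<open>auto elim!: eventually_mono simp: indicator_def\<close>)
  also have "\<dots> = Q b - Q a"
    by (rule integral_FTC_Icc_real) (use ab Q qc in auto)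
  finally show "(\<integral>t. q t * indicator {a..<b} t \<partial>lborel) = Q b - Q a" .
qed

lemma d_sums: "(\<lambda>n. 1 / (pi ^ 3 * real (Suc n) ^ 2)) sums (1 / (6 * pi))"
proof -
  have e: "(\<lambda>n. 1 / (pi ^ 3 * real (Suc n) ^ 2)) = (\<lambda>n. (1 / pi ^ 3) * (1 / real ((n + 1)\<^sup>2)))"
    by (simp add: fun_eq_iff)
  have "(1 / pi ^ 3) * (pi\<^sup>2 / 6) = 1 / (6 * pi)"
    by (simp add: field_simps power2_eq_square power3_eq_cube)
  then show ?thesis
    unfolding e using sums_mult[OF inverse_squares_sums, of "1 / pi ^ 3"] by simp
qed

lemma phi2_integral:
  fixes q Q :: "real \<Rightarrow> real"
  assumes Q: "\<And>t. (Q has_real_derivative q t) (at t)" and qc: "\<And>t. isCont q t"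
    and B: "\<And>t. \<bar>q t\<bar> \<le> B"
    and K: "\<And>n::nat. Q (2 * (real n + 1) * pi) - Q (2 * real n * pi) = K"
  shows "integrable lborel (\<lambda>t. q t * phi2 t) \<and> (\<integral>t. q t * phi2 t \<partial>lborel) = K / (3 * pi) + K / (6 * pi)"
proof -
  define d where "d n = 1 / (pi ^ 3 * real (Suc n) ^ 2)" for n
  define J where "J n = {2 * real (Suc n) * pi ..< 2 * (real (Suc n) + 1) * pi}" for n
  define f where "f n t = d n * (q t * indicator (J n) t)" for n t
  have dpos: "0 \<le> d n" for n by (simp add: d_def)
  have ds: "d sums (1 / (6 * pi))" unfolding d_def by (rule d_sums)
  have Jint: "integrable lborel (\<lambda>t. q t * indicator (J n) t)" for n
    unfolding J_def by (rule Ico_integral(1)[OF Q qc]) simp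
  have Jval: "(\<integral>t. q t * indicator (J n) t \<partial>lborel) = K" for n
  proof -
    have "(\<integral>t. q t * indicator (J n) t \<partial>lborel) = Q (2 * (real (Suc n) + 1) * pi) - Q (2 * real (Suc n) * pi)"
      unfolding J_def by (rule Ico_integral(2)[OF Q qc]) simp
    also have "\<dots> = K" using K[of "Suc n"] by simp
    finally show ?thesis .
  qed
  have fint: "integrable lborel (f n)" for n
    unfolding f_def by (intro integrable_mult_right Jint)
  have fb: "norm (f n t) \<le> d n * B" for n t
    using B[of t] dpos[of n] by (auto simp: f_def indicator_def abs_mult intro!: mult_left_mono)
  have sumdB: "summable (\<lambda>n. d n * B)" using ds by (intro summable_mult2) (auto simp: sums_iff)
  have nf: "(\<integral>t. norm (f n t) \<partial>lborel) = d n * (\<integral>t. \<bar>q t * indicator (J n) t\<bar> \<partial>lborel)" for n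
    by (simp add: f_def abs_mult dpos)
  have intJ: "integrable lborel (indicator (J n) :: real \<Rightarrow> real)" for n
    by (rule integrable_real_indicator) (auto simp: J_def)
  have mJ: "measure lborel (J n) = 2 * pi" for n
    by (simp add: J_def algebra_simps)
  have nfb: "(\<integral>t. \<bar>q t * indicator (J n) t\<bar> \<partial>lborel) \<le> 2 * pi * B" for n
  proof -
    have "(\<integral>t. \<bar>q t * indicator (J n) t\<bar> \<partial>lborel) \<le> (\<integral>t. B * indicator (J n) t \<partial>lborel)"
      using B by (intro integral_mono integrable_abs Jint integrable_mult_right intJ)
        (auto simp: indicator_def abs_mult)
    also have "\<dots> = B * (2 * pi)"
      by (simp add: mJ)
    finally show ?thesis by (simp add: algebra_simps)
  qed
  have sumnf: "summable (\<lambda>n. \<integral>t. norm (f n t) \<partial>lborel)"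
  proof (rule summable_comparison_test[of _ "\<lambda>n. d n * (2 * pi * B)"])
    have "norm (\<integral>t. norm (f n t) \<partial>lborel) \<le> d n * (2 * pi * B)" for n
    proof -
      have "norm (\<integral>t. norm (f n t) \<partial>lborel) = (\<integral>t. norm (f n t) \<partial>lborel)"
        by (simp add: integral_nonneg_AE)
      also have "\<dots> = d n * (\<integral>t. \<bar>q t * indicator (J n) t\<bar> \<partial>lborel)" by (rule nf)
      also have "\<dots> \<le> d n * (2 * pi * B)" by (rule mult_left_mono[OF nfb dpos])
      finally show ?thesis .
    qed
    then show "\<exists>N. \<forall>n\<ge>N. norm (\<integral>t. norm (f n t) \<partial>lborel) \<le> d n * (2 * pi * B)" by blast
    show "summable (\<lambda>n. d n * (2 * pi * B))" using ds by (intro summable_mult2) (auto simp: sums_iff)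
  qed
  have sumpt: "AE t in lborel. summable (\<lambda>n. norm (f n t))"
    by (intro AE_I2 summable_comparison_test[OF _ sumdB]) (use fb in auto)
  have S1: "integrable lborel (\<lambda>t. \<Sum>n. f n t)"
    by (rule integrable_suminf[OF fint sumpt sumnf])
  have S2: "(\<integral>t. (\<Sum>n. f n t) \<partial>lborel) = (\<Sum>n. integral\<^sup>L lborel (f n))"
    by (rule integral_suminf[OF fint sumpt sumnf])
  have fval: "integral\<^sup>L lborel (f n) = d n * K" for n
    unfolding f_def by (simp add: Jval)
  have S3: "(\<Sum>n. integral\<^sup>L lborel (f n)) = K / (6 * pi)"
    using sums_mult2[OF ds, of K] by (simp add: fval sums_iff)
  have I0int: "integrable lborel (\<lambda>t. q t * indicator {0..<2*pi} t)"
    by (rule Ico_integral(1)[OF Q qc]) simp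
  have I0val: "(\<integral>t. q t * indicator {0..<2*pi} t \<partial>lborel) = K"
    using Ico_integral(2)[OF Q qc, of 0 "2*pi"] K[of 0] by simp
  have summ: "summable (\<lambda>n. d n * indicator (J n) t)" for t
    by (rule summable_comparison_test[of _ d]) (use dpos ds in \<open>auto simp: sums_iff indicator_def\<close>)
  have eq: "q t * phi2 t = (1 / (3 * pi)) * (q t * indicator {0..<2*pi} t) + (\<Sum>n. f n t)" for t
  proof -
    have "q t * (\<Sum>n. d n * indicator (J n) t) = (\<Sum>n. q t * (d n * indicator (J n) t))"
      using suminf_mult[OF summ[of t], of "q t"] by simp
    then show ?thesis
      unfolding phi2_def by (simp add: f_def d_def J_def algebra_simps)
  qed
  have "integrable lborel (\<lambda>t. (1 / (3 * pi)) * (q t * indicator {0..<2*pi} t) + (\<Sum>n. f n t))"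
    by (intro Bochner_Integration.integrable_add integrable_mult_right I0int S1)
  moreover have "(\<integral>t. (1 / (3 * pi)) * (q t * indicator {0..<2*pi} t) + (\<Sum>n. f n t) \<partial>lborel) = K / (3 * pi) + K / (6 * pi)"
    by (subst Bochner_Integration.integral_add) (auto intro!: integrable_mult_right I0int S1 simp: S2 S3 I0val)
  ultimately show ?thesis by (simp add: eq)
qed
lemma phi2_neg: "t < 0 \<Longrightarrow> phi2 t = 0"
proof -
  assume t: "t < 0"
  have "\<not> 2 * real (Suc n) * pi \<le> t" for n
  proof -
    have "0 < 2 * real (Suc n) * pi" by simp
    then show ?thesis using t by linarith
  qed
  then show ?thesis using t by (simp add: phi2_def indicator_def)
qed

lemma exp_xi: "exp t * xi_tail t = (3 * pi + 1 + sin t - cos t) * phi2 t"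
proof -
  have s: "sqrt 2 * sin (t - pi / 4) = sin t - cos t"
    by (simp add: sin_diff sin_45 cos_45 algebra_simps)
  have "exp t * exp (- t) = 1" by (simp add: exp_minus)
  then show ?thesis unfolding xi_tail_def phi1_def
    by (simp add: s algebra_simps) (metis mult.assoc mult.commute mult_1)
qed

lemma case_lemma:
  fixes M :: "real measure" and G p Q :: "real \<Rightarrow> real"
  assumes P: "prob_space M" and sM: "sets M = sets borel" and neg: "emeasure M {..<0} = 0"
    and tail: "\<And>x. x \<ge> 0 \<Longrightarrow> measure M {x<..} = xi_tail x"
    and G: "\<And>t. (G has_real_derivative exp t * p t) (at t)" and pc: "\<And>t. isCont p t"
    and Q: "\<And>t. (Q has_real_derivative p t * (3 * pi + 1 + sin t - cos t)) (at t)"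
    and B: "\<And>t. \<bar>p t * (3 * pi + 1 + sin t - cos t)\<bar> \<le> B"
    and K: "\<And>n::nat. Q (2 * (real n + 1) * pi) - Q (2 * real n * pi) = K"
  shows "integrable M G \<and> integral\<^sup>L M G = G 0 + (K / (3 * pi) + K / (6 * pi))"
proof -
  have qc: "isCont (\<lambda>t. p t * (3 * pi + 1 + sin t - cos t)) t" for t
    by (intro continuous_intros pc)
  have ph: "integrable lborel (\<lambda>t. p t * (3 * pi + 1 + sin t - cos t) * phi2 t) \<and>
      (\<integral>t. p t * (3 * pi + 1 + sin t - cos t) * phi2 t \<partial>lborel) = K / (3 * pi) + K / (6 * pi)"
    by (rule phi2_integral[OF Q qc B K])
  have eq: "(\<lambda>t. exp t * p t * measure M {t<..} * indicator {0..} t) = (\<lambda>t. p t * (3 * pi + 1 + sin t - cos t) * phi2 t)"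
  proof
    fix t :: real
    show "exp t * p t * measure M {t<..} * indicator {0..} t = p t * (3 * pi + 1 + sin t - cos t) * phi2 t"
    proof (cases "0 \<le> t")
      case True
      then have "exp t * p t * measure M {t<..} * indicator {0..} t = p t * (exp t * xi_tail t)"
        by (simp add: tail)
      then show ?thesis by (simp add: exp_xi)
    next
      case False
      then show ?thesis by (simp add: phi2_neg)
    qed
  qed
  have hc: "isCont (\<lambda>t. exp t * p t) t" for t by (intro continuous_intros pc)
  have "integrable M G \<and> integral\<^sup>L M G = G 0 + (\<integral>t. exp t * p t * measure M {t<..} * indicator {0..} t \<partial>lborel)"
    by (rule tail_fubini[OF P sM neg G hc]) (use ph eq in simp)
  then show ?thesis using ph eq by simp
qed

lemma sin_cos_2npi: "sin (2 * real n * pi) = 0" "cos (2 * real n * pi) = 1"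
  "sin (2 * (real n + 1) * pi) = 0" "cos (2 * (real n + 1) * pi) = 1"
proof -
  show "sin (2 * real n * pi) = 0" "cos (2 * real n * pi) = 1"
    using sin_npi[of "2*n"] cos_npi[of "2*n"] by (simp_all add: mult.assoc)
  show "sin (2 * (real n + 1) * pi) = 0" "cos (2 * (real n + 1) * pi) = 1"
    using sin_npi[of "2*n+2"] cos_npi[of "2*n+2"] by (simp_all add: algebra_simps)
qed

lemma bound: "\<bar>(a::real) * (3 * pi + 1 + sin t - cos t)\<bar> \<le> 2 * (3 * pi + 3)" if "\<bar>a\<bar> \<le> 2"
proof -
  have "\<bar>3 * pi + 1 + sin t - cos t\<bar> \<le> 3 * pi + 3"
    using sin_le_one[of t] cos_le_one[of t] sin_ge_minus_one[of t] cos_ge_minus_one[of t] pi_gt3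
    by (intro abs_leI) linarith+
  then show ?thesis unfolding abs_mult using that by (intro mult_mono) auto
qed
theorem lemma3p1:
  fixes M :: "real measure"
  assumes "prob_space M"
    and "sets M = sets borel"
    and "emeasure M {..<0} = 0"
    and "\<And>x. x \<ge> 0 \<Longrightarrow> measure M {x<..} = xi_tail x"
  shows "(\<integral>\<^sup>+ x. ennreal (exp x) \<partial>M) < \<infinity>
    \<and> integrable M (\<lambda>x. exp ((1 + \<i>) * complex_of_real x))
    \<and> (\<integral> x. exp ((1 + \<i>) * complex_of_real x) \<partial>M) = 0"
proof -
  define A where "A = 3 * pi + 1"
  note cl = case_lemma[OF assms]
  have c1: "integrable M exp \<and> integral\<^sup>L M exp = exp 0 + ((A * 2 * pi) / (3 * pi) + (A * 2 * pi) / (6 * pi))"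
  proof (rule cl[where p = "\<lambda>_. 1" and Q = "\<lambda>t. A * t - cos t - sin t" and B = "2 * (3 * pi + 3)"])
    show "(exp has_real_derivative exp t * 1) (at t)" for t
      by (auto intro!: derivative_eq_intros)
    show "((\<lambda>t. A * t - cos t - sin t) has_real_derivative 1 * (3 * pi + 1 + sin t - cos t)) (at t)" for t
      by (auto intro!: derivative_eq_intros simp: A_def)
    show "\<bar>1 * (3 * pi + 1 + sin t - cos t)\<bar> \<le> 2 * (3 * pi + 3)" for t
      by (rule bound) simp
    show "A * (2 * (real n + 1) * pi) - cos (2 * (real n + 1) * pi) - sin (2 * (real n + 1) * pi) -
         (A * (2 * real n * pi) - cos (2 * real n * pi) - sin (2 * real n * pi)) = A * 2 * pi" for n
      unfolding sin_cos_2npi by (simp add: algebra_simps)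
  qed (auto intro!: continuous_intros)
  have c2: "integrable M (\<lambda>x. exp x * cos x) \<and> integral\<^sup>L M (\<lambda>x. exp x * cos x) = exp 0 * cos 0 + ((- 2 * pi) / (3 * pi) + (- 2 * pi) / (6 * pi))"
  proof (rule cl[where p = "\<lambda>t. cos t - sin t" and Q = "\<lambda>t. A * (sin t + cos t) - t + sin t ^ 2" and B = "2 * (3 * pi + 3)"])
    show "((\<lambda>x. exp x * cos x) has_real_derivative exp t * (cos t - sin t)) (at t)" for t
      by (auto intro!: derivative_eq_intros simp: algebra_simps)
    show "((\<lambda>t. A * (sin t + cos t) - t + sin t ^ 2) has_real_derivative (cos t - sin t) * (3 * pi + 1 + sin t - cos t)) (at t)" for t
    proof -
      have e: "(cos t - sin t) * (3 * pi + 1 + sin t - cos t) = A * (cos t - sin t) - 1 + 2 * sin t * cos t"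
        using sin_cos_squared_add[of t] by (simp add: A_def algebra_simps power2_eq_square)
      show ?thesis unfolding e
        by (auto intro!: derivative_eq_intros simp: algebra_simps)
    qed
    show "\<bar>(cos t - sin t) * (3 * pi + 1 + sin t - cos t)\<bar> \<le> 2 * (3 * pi + 3)" for t
      by (rule bound) (use sin_le_one[of t] cos_le_one[of t] sin_ge_minus_one[of t] cos_ge_minus_one[of t] in \<open>intro abs_leI; linarith\<close>)
    show "A * (sin (2 * (real n + 1) * pi) + cos (2 * (real n + 1) * pi)) - 2 * (real n + 1) * pi + sin (2 * (real n + 1) * pi) ^ 2 -
         (A * (sin (2 * real n * pi) + cos (2 * real n * pi)) - 2 * real n * pi + sin (2 * real n * pi) ^ 2) = - 2 * pi" for n
      unfolding sin_cos_2npi by (simp add: algebra_simps)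
  qed (auto intro!: continuous_intros)
  have c3: "integrable M (\<lambda>x. exp x * sin x) \<and> integral\<^sup>L M (\<lambda>x. exp x * sin x) = exp 0 * sin 0 + (0 / (3 * pi) + 0 / (6 * pi))"
  proof (rule cl[where p = "\<lambda>t. sin t + cos t" and Q = "\<lambda>t. A * (sin t - cos t) - sin t * cos t" and B = "2 * (3 * pi + 3)"])
    show "((\<lambda>x. exp x * sin x) has_real_derivative exp t * (sin t + cos t)) (at t)" for t
      by (auto intro!: derivative_eq_intros simp: algebra_simps)
    show "((\<lambda>t. A * (sin t - cos t) - sin t * cos t) has_real_derivative (sin t + cos t) * (3 * pi + 1 + sin t - cos t)) (at t)" for t
    proof -
      have e: "(sin t + cos t) * (3 * pi + 1 + sin t - cos t) = A * (cos t + sin t) - (cos t * cos t + - sin t * sin t)"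
        by (simp add: A_def algebra_simps)
      show ?thesis unfolding e
        by (auto intro!: derivative_eq_intros simp: algebra_simps)
    qed
    show "\<bar>(sin t + cos t) * (3 * pi + 1 + sin t - cos t)\<bar> \<le> 2 * (3 * pi + 3)" for t
      by (rule bound) (use sin_le_one[of t] cos_le_one[of t] sin_ge_minus_one[of t] cos_ge_minus_one[of t] in \<open>intro abs_leI; linarith\<close>)
    show "A * (sin (2 * (real n + 1) * pi) - cos (2 * (real n + 1) * pi)) - sin (2 * (real n + 1) * pi) * cos (2 * (real n + 1) * pi) -
         (A * (sin (2 * real n * pi) - cos (2 * real n * pi)) - sin (2 * real n * pi) * cos (2 * real n * pi)) = 0" for n
      unfolding sin_cos_2npi by (simp add: algebra_simps)
  qed (auto intro!: continuous_intros)
  have v2: "integral\<^sup>L M (\<lambda>x. exp x * cos x) = 0" using c2 by simp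
  have v3: "integral\<^sup>L M (\<lambda>x. exp x * sin x) = 0" using c3 by simp
  have ce: "exp ((1 + \<i>) * complex_of_real x) = complex_of_real (exp x * cos x) + \<i> * complex_of_real (exp x * sin x)" for x
    by (simp add: complex_eq_iff Re_exp Im_exp)
  have ic: "integrable M (\<lambda>x. complex_of_real (exp x * cos x))"
    using c2 complex_of_real_integrable_eq[of M "\<lambda>x. exp x * cos x"] by blast
  have isn: "integrable M (\<lambda>x. \<i> * complex_of_real (exp x * sin x))"
    using c3 complex_of_real_integrable_eq[of M "\<lambda>x. exp x * sin x"] by (intro integrable_mult_right) blast
  have ci: "integrable M (\<lambda>x. complex_of_real (exp x * cos x) + \<i> * complex_of_real (exp x * sin x))"
    by (rule Bochner_Integration.integrable_add[OF ic isn])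
  have cv: "(\<integral>x. complex_of_real (exp x * cos x) + \<i> * complex_of_real (exp x * sin x) \<partial>M) = 0"
    unfolding Bochner_Integration.integral_add[OF ic isn]
    by (simp only: integral_mult_right_zero integral_complex_of_real v2 v3) simp
  have nn: "(\<integral>\<^sup>+ x. ennreal (exp x) \<partial>M) < \<infinity>"
    using c1 unfolding integrable_iff_bounded by simp
  show ?thesis using nn ci cv by (simp add: ce)
qed

end
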